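(* Let $\gamma>0$, $\bar\sigma>0$, $\gamma_0\in(0,\gamma)$ and $n_0$ a positive integer. Let $C(x;n_0)=\mathrm E\left[\inf\{n\ge n_0:\bar Z(n)<x\}\right]$ for $x>0$, where $\bar Z(n)$ is the average of the first $n$ terms of an i.i.d. standard normal sequence, and let $n_g=C\left(\frac{\gamma-\gamma_0}{\bar\sigma};n_0\right)-n_0$. Then $n_g\le\beta e^{-\kappa n_0}$, where $\kappa=\frac{(\gamma-\gamma_0)^2}{2\bar\sigma^2}$ and $\beta=(1-e^{-\kappa})^{-1}$. *)

theory Defs
  imports "HOL-Probability.Probability"
begin

definition sample_mean :: "(nat \<Rightarrow> 'a \<Rightarrow> real) \<Rightarrow> nat \<Rightarrow> 'a \<Rightarrow> real" where
  "sample_mean X n \<omega> = (\<Sum>i<n. X i \<omega>) / real n"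

text \<open>The stopping time inf{n >= n0 : Zbar(n) < x}, valued in extended naturals
  (infimum of the empty set is infinity).\<close>
definition hit_time :: "(nat \<Rightarrow> 'a \<Rightarrow> real) \<Rightarrow> real \<Rightarrow> nat \<Rightarrow> 'a \<Rightarrow> enat" where
  "hit_time X x n0 \<omega> = (INF n \<in> {n. n0 \<le> n \<and> sample_mean X n \<omega> < x}. enat n)"

definition C_exp :: "'a measure \<Rightarrow> (nat \<Rightarrow> 'a \<Rightarrow> real) \<Rightarrow> real \<Rightarrow> nat \<Rightarrow> ennreal" where
  "C_exp M X x n0 = (\<integral>\<^sup>+ \<omega>. ennreal_of_enat (hit_time X x n0 \<omega>) \<partial>M)"

end

theory Submission imports Defs begin

lemma std_tail:
  assumes Y: "distributed M lborel Y (\<lambda>x. ennreal (std_normal_density x))" and a: "a \<ge> 0"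
  shows "emeasure M {\<omega>\<in>space M. a \<le> Y \<omega>} \<le> ennreal (exp (-a\<^sup>2/2))"
proof -
  have "{\<omega>\<in>space M. a \<le> Y \<omega>} = Y -` {a..} \<inter> space M" by auto
  hence "emeasure M {\<omega>\<in>space M. a \<le> Y \<omega>} = (\<integral>\<^sup>+y. ennreal (std_normal_density y) * indicator {a..} y \<partial>lborel)"
    using distributed_emeasure[OF Y, of "{a..}"] by simp
  also have "\<dots> \<le> (\<integral>\<^sup>+y. ennreal (exp (-a\<^sup>2/2)) * ennreal (normal_density a 1 y) \<partial>lborel)"
  proof (intro nn_integral_mono)
    fix y :: real
    show "ennreal (std_normal_density y) * indicator {a..} y \<le> ennreal (exp (-a\<^sup>2/2)) * ennreal (normal_density a 1 y)"
    proof (cases "a \<le> y")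
      case True
      have e: "- y\<^sup>2 / 2 \<le> -a\<^sup>2/2 + (-(y-a)\<^sup>2 / 2)" using True a
        by (simp add: power2_eq_square algebra_simps) (metis mult_left_mono)
      have "std_normal_density y \<le> exp (-a\<^sup>2/2) * normal_density a 1 y"
        unfolding std_normal_density_def normal_density_def
        using e by (simp add: mult_exp_exp divide_right_mono)
      then show ?thesis using True
        by (simp add: ennreal_mult''[symmetric] ennreal_leI)
    qed simp
  qed
  also have "\<dots> = ennreal (exp (-a\<^sup>2/2)) * (\<integral>\<^sup>+y. ennreal (normal_density a 1 y) \<partial>lborel)"
    by (rule nn_integral_cmult) simp
  also have "(\<integral>\<^sup>+y. ennreal (normal_density a 1 y) \<partial>lborel) = 1"
    by (subst nn_integral_eq_integral) auto
  finally show ?thesis by simp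
qed

lemma mean_tail:
  assumes P: "prob_space M"
    and ind: "prob_space.indep_vars M (\<lambda>_. borel) X UNIV"
    and N: "\<And>i. distributed M lborel (X i) (\<lambda>x. ennreal (std_normal_density x))"
    and x: "x \<ge> 0" and k: "k \<ge> 1"
  shows "emeasure M {\<omega>\<in>space M. x \<le> sample_mean X k \<omega>} \<le> ennreal (exp (- (x\<^sup>2/2) * real k))"
proof -
  interpret prob_space M by (rule P)
  have "distributed M lborel (\<lambda>\<omega>. \<Sum>i\<in>{..<k}. X i \<omega>)
     (normal_density (\<Sum>i\<in>{..<k}. 0) (sqrt (\<Sum>i\<in>{..<k}. 1\<^sup>2)))"
    using k by (intro sum_indep_normal indep_vars_subset[OF ind] N) (auto simp: lessThan_empty_iff)
  hence "distributed M lborel (\<lambda>\<omega>. \<Sum>i\<in>{..<k}. X i \<omega>) (normal_density 0 (sqrt k))" by simp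
  hence D: "distributed M lborel (\<lambda>\<omega>. ((\<Sum>i\<in>{..<k}. X i \<omega>) - 0) / sqrt k) std_normal_density"
    using normal_standard_normal_convert[of "sqrt k"] k by simp
  have sk: "sqrt (real k) > 0" using k by simp
  have "{\<omega>\<in>space M. x \<le> sample_mean X k \<omega>} = {\<omega>\<in>space M. x * sqrt k \<le> ((\<Sum>i\<in>{..<k}. X i \<omega>) - 0) / sqrt k}"
  proof -
    have "x \<le> s / real k \<longleftrightarrow> x * sqrt k \<le> s / sqrt k" for s
    proof -
      have rk: "real k = sqrt k * sqrt k" by simp
      show ?thesis using sk by (subst rk) (simp add: field_simps)
    qed
    thus ?thesis by (simp add: sample_mean_def)
  qed
  also have "emeasure M \<dots> \<le> ennreal (exp (-(x * sqrt k)\<^sup>2/2))"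
    by (rule std_tail[OF D]) (use x in simp)
  also have "(x * sqrt k)\<^sup>2 = x\<^sup>2 * real k" by (simp add: power_mult_distrib)
  finally show ?thesis by simp
qed

theorem lemma6:
  fixes M :: "'a measure" and X :: "nat \<Rightarrow> 'a \<Rightarrow> real"
    and \<gamma> \<sigma> \<gamma>\<^sub>0 :: real and n\<^sub>0 :: nat
  assumes "prob_space M"
    and "prob_space.indep_vars M (\<lambda>_. borel) X UNIV"
    and "\<And>i. distributed M lborel (X i) (\<lambda>x. ennreal (std_normal_density x))"
    and "\<gamma> > 0" and "\<sigma> > 0" and "0 < \<gamma>\<^sub>0" and "\<gamma>\<^sub>0 < \<gamma>" and "n\<^sub>0 \<ge> 1"
  shows "let \<kappa> = (\<gamma> - \<gamma>\<^sub>0)\<^sup>2 / (2 * \<sigma>\<^sup>2);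
             \<beta> = 1 / (1 - exp (- \<kappa>));
             n\<^sub>g = C_exp M X ((\<gamma> - \<gamma>\<^sub>0) / \<sigma>) n\<^sub>0 - ennreal (real n\<^sub>0)
         in n\<^sub>g \<le> ennreal (\<beta> * exp (- \<kappa> * real n\<^sub>0))"
proof -
  interpret prob_space M by (rule assms(1))
  define x where "x = (\<gamma> - \<gamma>\<^sub>0) / \<sigma>"
  define \<kappa> where "\<kappa> = (\<gamma> - \<gamma>\<^sub>0)\<^sup>2 / (2 * \<sigma>\<^sup>2)"
  have x0: "x > 0" using assms unfolding x_def by simp
  have \<kappa>x: "\<kappa> = x\<^sup>2/2" unfolding \<kappa>_def x_def by (simp add: power_divide)
  have \<kappa>0: "\<kappa> > 0" using x0 unfolding \<kappa>x by simp
  have [measurable]: "X i \<in> borel_measurable M" for i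
    using distributed_measurable[OF assms(3)[of i]] by simp
  have [measurable]: "sample_mean X n \<in> borel_measurable M" for n
    unfolding sample_mean_def[abs_def] by measurable
  define A where "A k = {\<omega>\<in>space M. x \<le> sample_mean X (k + n\<^sub>0) \<omega>}" for k
  have A_sets[measurable]: "A k \<in> sets M" for k unfolding A_def by measurable
  define g where "g \<omega> = ennreal (real n\<^sub>0) + (\<Sum>k. indicator (A k) \<omega>)" for \<omega>
  define T where "T \<omega> = hit_time X x n\<^sub>0 \<omega>" for \<omega>
  have bound_nat: "ennreal (real m) \<le> g \<omega>" if \<omega>: "\<omega> \<in> space M" and m: "enat m \<le> T \<omega>" for \<omega> m
  proof (cases "m \<le> n\<^sub>0")
    case True
    then show ?thesis unfolding g_def by (simp add: add_increasing2)
  next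
    case False
    have inA: "\<omega> \<in> A j" if "j < m - n\<^sub>0" for j
    proof (rule ccontr)
      assume "\<omega> \<notin> A j"
      hence "j + n\<^sub>0 \<in> {n. n\<^sub>0 \<le> n \<and> sample_mean X n \<omega> < x}" using \<omega> unfolding A_def by auto
      hence "T \<omega> \<le> enat (j + n\<^sub>0)" unfolding T_def hit_time_def by (rule INF_lower)
      hence "enat m \<le> enat (j + n\<^sub>0)" using m by (rule order_trans[rotated])
      with that show False by simp
    qed
    have "(\<Sum>j<m - n\<^sub>0. indicator (A j) \<omega> :: ennreal) = (\<Sum>j<m - n\<^sub>0. 1)"
      using inA by (intro sum.cong) auto
    also have "\<dots> = ennreal (real (m - n\<^sub>0))" by (simp add: ennreal_of_nat_eq_real_of_nat)
    finally have "ennreal (real (m - n\<^sub>0)) \<le> (\<Sum>k. indicator (A k) \<omega>)"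
      by (metis sum_le_suminf summableI zero_le finite_lessThan)
    hence "ennreal (real n\<^sub>0) + ennreal (real (m - n\<^sub>0)) \<le> g \<omega>" unfolding g_def by (rule add_left_mono)
    moreover have "ennreal (real n\<^sub>0) + ennreal (real (m - n\<^sub>0)) = ennreal (real m)"
      using False by (simp add: ennreal_plus[symmetric] del: ennreal_plus)
    ultimately show ?thesis by simp
  qed
  have ptw: "ennreal_of_enat (T \<omega>) \<le> g \<omega>" if \<omega>: "\<omega> \<in> space M" for \<omega>
  proof (cases "T \<omega>")
    case (enat m)
    then show ?thesis using bound_nat[OF \<omega>, of m] by (simp add: ennreal_of_nat_eq_real_of_nat)
  next
    case infinity
    have "(SUP m. of_nat m :: ennreal) \<le> g \<omega>"
      using bound_nat[OF \<omega>] infinity by (intro SUP_least) (simp add: ennreal_of_nat_eq_real_of_nat)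
    then show ?thesis using infinity by (simp add: ennreal_SUP_of_nat_eq_top)
  qed
  have "C_exp M X x n\<^sub>0 = (\<integral>\<^sup>+\<omega>. ennreal_of_enat (T \<omega>) \<partial>M)" unfolding C_exp_def T_def ..
  also have "\<dots> \<le> (\<integral>\<^sup>+\<omega>. g \<omega> \<partial>M)" by (intro nn_integral_mono ptw)
  also have "\<dots> = ennreal (real n\<^sub>0) + (\<Sum>k. emeasure M (A k))"
    unfolding g_def
    by (subst nn_integral_add) (auto simp: nn_integral_suminf emeasure_space_1)
  also have "(\<Sum>k. emeasure M (A k)) \<le> (\<Sum>k. ennreal (exp (-\<kappa> * real n\<^sub>0) * exp (-\<kappa>) ^ k))"
  proof (intro suminf_le summableI)
    fix k
    have "emeasure M (A k) \<le> ennreal (exp (- (x\<^sup>2/2) * real (k + n\<^sub>0)))"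
      unfolding A_def using assms x0 by (intro mean_tail) auto
    also have "exp (- (x\<^sup>2/2) * real (k + n\<^sub>0)) = exp (-\<kappa> * real n\<^sub>0) * exp (-\<kappa>) ^ k"
      by (simp add: \<kappa>x exp_of_nat_mult[symmetric] exp_add[symmetric] algebra_simps)
    finally show "emeasure M (A k) \<le> ennreal (exp (-\<kappa> * real n\<^sub>0) * exp (-\<kappa>) ^ k)" .
  qed
  also have "(\<Sum>k. ennreal (exp (-\<kappa> * real n\<^sub>0) * exp (-\<kappa>) ^ k)) = ennreal (\<Sum>k. exp (-\<kappa> * real n\<^sub>0) * exp (-\<kappa>) ^ k)"
    using \<kappa>0 by (intro suminf_ennreal2) (auto intro!: summable_mult summable_geometric)
  also have "(\<Sum>k. exp (-\<kappa> * real n\<^sub>0) * exp (-\<kappa>) ^ k) = exp (-\<kappa> * real n\<^sub>0) * (1 / (1 - exp (-\<kappa>)))"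
    using \<kappa>0 by (subst suminf_mult) (auto simp: suminf_geometric summable_geometric)
  finally have "C_exp M X x n\<^sub>0 \<le> ennreal (real n\<^sub>0) + ennreal (1 / (1 - exp (-\<kappa>)) * exp (-\<kappa> * real n\<^sub>0))"
    by (simp add: mult.commute add_left_mono)
  then show ?thesis unfolding Let_def \<kappa>_def[symmetric] x_def[symmetric]
    by (simp add: ennreal_minus_le_iff)
qed

end
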